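(* Let $S$ be an integral monoid with zero $0$, and let $0,1\in E\subseteq E(S)$. Then $S$ is inductive when regarded as an $E$-demigroup via $d(s)=1$ for all $s$ (i.e. as a left $E$-monoid) if and only if it is inductive when regarded as an $E$-demigroup via $d(0)=0$ and $d(s)=1$ for $s\neq0$ (i.e. as a left $E$-monoid with zero). In that case $C^0_E(S)$ is closed under the multiplication of $Rest(E,S)$, and the multiplication of $Rest_0(E,S)$ coincides with the restriction to $C^0_E(S)$ of the multiplication of $Rest(E,S)$.
   Context: For a semigroup $S$, $E(S)$ is its set of idempotents; for $e,f\in E(S)$, $e\le_r f$ iff $e=ef$. $E\subseteq E(S)$ is right pre-reduced if $e=ef$ and $f=fe$ imply $e=f$ for $e,f\in E$. A monoid with zero is integral if $st=0$ implies $s=0$ or $t=0$. A demigroup is a semigroup $S$ with unary $d$ such that $d(x)\in E(S)$, $d(x)x=x$, $d(xy)=d(xd(y))$. For $E\subseteq E(S)$, $S$ is an $E$-demigroup if $d(s)\in E$ for all $s$ and $ed(e)=e$ for all $e\in E$. It is inductive if $E$ is right pre-reduced, $(E,\le_r)$ is a meet-semilattice with meet $\wedge$, and there is a function $\cdot:S\times E\to E$ (necessarily unique) with (I1) for all $t\in S$, $e\in E$, $s\in S$: ($ste=st$ and $sd(t)=s$) iff $s(t\cdot e)=s$; (I2) for $s\in S$, $e,f\in E$: $se=sf=s$ implies $s(e\wedge f)=s$. For an inductive $E$-demigroup, $Rest_d(E,S)$ is the set $C^d_E(S)=\{(e,s)\in E\times S\mid es=s,\ d(e)=d(s)\}$ with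 multiplication $(e,s)(f,t)=(e\wedge(s\cdot f),(e\wedge(s\cdot f))st)$ and $D((e,s))=(e,e)$. $Rest(E,S)$ denotes $Rest_d(E,S)$ for $d\equiv1$ (underlying set $C_E(S)=\{(e,s)\in E\times S\mid es=s\}$); $Rest_0(E,S)$ denotes $Rest_d(E,S)$ for $d(0)=0$, $d(s)=1$ ($s\ne0$) (underlying set $C^0_E(S)=\{(e,s)\in C_E(S)\mid s=0\Rightarrow e=0\}$). *)

theory Defs
  imports Main
begin

definition idem :: "'a::monoid_mult \<Rightarrow> bool" where
  "idem e \<longleftrightarrow> e * e = e"

definition le_r :: "'a::monoid_mult \<Rightarrow> 'a \<Rightarrow> bool" where
  "le_r e f \<longleftrightarrow> e = e * f"

definition right_pre_reduced :: "'a::monoid_mult set \<Rightarrow> bool" where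
  "right_pre_reduced E \<longleftrightarrow> (\<forall>e\<in>E. \<forall>f\<in>E. e = e * f \<and> f = f * e \<longrightarrow> e = f)"

definition demigroup :: "('a::monoid_mult \<Rightarrow> 'a) \<Rightarrow> bool" where
  "demigroup d \<longleftrightarrow> (\<forall>x. idem (d x) \<and> d x * x = x) \<and> (\<forall>x y. d (x * y) = d (x * d y))"

definition E_demigroup :: "('a::monoid_mult \<Rightarrow> 'a) \<Rightarrow> 'a set \<Rightarrow> bool" where
  "E_demigroup d E \<longleftrightarrow> demigroup d \<and> (\<forall>e\<in>E. idem e) \<and> (\<forall>s. d s \<in> E) \<and> (\<forall>e\<in>E. e * d e = e)"

definition is_meet :: "'a::monoid_mult set \<Rightarrow> 'a \<Rightarrow> 'a \<Rightarrow> 'a \<Rightarrow> bool" where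
  "is_meet E e f m \<longleftrightarrow> m \<in> E \<and> le_r m e \<and> le_r m f \<and> (\<forall>g\<in>E. le_r g e \<and> le_r g f \<longrightarrow> le_r g m)"

definition meet :: "'a::monoid_mult set \<Rightarrow> 'a \<Rightarrow> 'a \<Rightarrow> 'a" where
  "meet E e f = (THE m. is_meet E e f m)"

definition meet_semilattice :: "'a::monoid_mult set \<Rightarrow> bool" where
  "meet_semilattice E \<longleftrightarrow> (\<forall>e\<in>E. \<forall>f\<in>E. \<exists>m. is_meet E e f m)"

text \<open>Conditions (I1) and (I2) for a candidate function dot : S x E -> E.\<close>
definition dot_ok :: "('a::monoid_mult \<Rightarrow> 'a) \<Rightarrow> 'a set \<Rightarrow> ('a \<Rightarrow> 'a \<Rightarrow> 'a) \<Rightarrow> bool" where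
  "dot_ok d E dot \<longleftrightarrow>
     (\<forall>t e. e \<in> E \<longrightarrow> dot t e \<in> E) \<and>
     (\<forall>t. \<forall>e\<in>E. \<forall>s. (s * t * e = s * t \<and> s * d t = s) \<longleftrightarrow> s * dot t e = s) \<and>
     (\<forall>s. \<forall>e\<in>E. \<forall>f\<in>E. s * e = s \<and> s * f = s \<longrightarrow> s * meet E e f = s)"

definition inductive_Edemigroup :: "('a::monoid_mult \<Rightarrow> 'a) \<Rightarrow> 'a set \<Rightarrow> bool" where
  "inductive_Edemigroup d E \<longleftrightarrow> E_demigroup d E \<and> right_pre_reduced E \<and> meet_semilattice E
     \<and> (\<exists>dot. dot_ok d E dot)"

definition ind_dot :: "('a::monoid_mult \<Rightarrow> 'a) \<Rightarrow> 'a set \<Rightarrow> 'a \<Rightarrow> 'a \<Rightarrow> 'a" where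
  "ind_dot d E = (SOME dot. dot_ok d E dot)"

text \<open>Underlying set C^d_E(S) of Rest_d(E,S) and its multiplication.\<close>
definition C_d :: "('a::monoid_mult \<Rightarrow> 'a) \<Rightarrow> 'a set \<Rightarrow> ('a \<times> 'a) set" where
  "C_d d E = {(e, s). e \<in> E \<and> e * s = s \<and> d e = d s}"

definition rest_mult :: "('a::monoid_mult \<Rightarrow> 'a) \<Rightarrow> 'a set \<Rightarrow> 'a \<times> 'a \<Rightarrow> 'a \<times> 'a \<Rightarrow> 'a \<times> 'a" where
  "rest_mult d E x y = (case x of (e, s) \<Rightarrow> case y of (f, t) \<Rightarrow>
      (let g = meet E e (ind_dot d E s f) in (g, g * s * t)))"

definition d_one :: "'a::monoid_mult \<Rightarrow> 'a" where
  "d_one s = 1"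

definition d_zero :: "'a::{monoid_mult, zero} \<Rightarrow> 'a" where
  "d_zero s = (if s = 0 then 0 else 1)"

end

theory Submission
  imports Defs
begin

lemma demi_one:
  fixes E :: "'a::{monoid_mult, mult_zero} set"
  assumes "\<forall>e\<in>E. e * e = e" "1 \<in> E"
  shows "E_demigroup d_one E"
  using assms by (auto simp: E_demigroup_def demigroup_def d_one_def idem_def)

lemma demi_zero:
  fixes E :: "'a::{monoid_mult, mult_zero} set"
  assumes integ: "\<forall>s t::'a. s * t = 0 \<longrightarrow> s = 0 \<or> t = 0"
    and "\<forall>e\<in>E. e * e = e" "0 \<in> E" "1 \<in> E"
  shows "E_demigroup d_zero E"
  using assms by (auto simp: E_demigroup_def demigroup_def d_zero_def idem_def)

lemma conv1:
  fixes E :: "'a::{monoid_mult, mult_zero} set"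
  assumes "dot_ok d_one E dot" "0 \<in> E"
  shows "dot_ok d_zero E (\<lambda>t e. if t = 0 then 0 else dot t e)"
  using assms unfolding dot_ok_def d_one_def d_zero_def
  by (auto simp: mult.assoc)

lemma conv2:
  fixes E :: "'a::{monoid_mult, mult_zero} set"
  assumes ok: "dot_ok d_zero E dot" and one: "1 \<in> E"
  shows "dot_ok d_one E (\<lambda>t e. if t = 0 then 1 else dot t e)"
proof -
  have P1: "\<forall>t e. e \<in> E \<longrightarrow> dot t e \<in> E"
   and P2: "\<forall>t. \<forall>e\<in>E. \<forall>s. (s * t * e = s * t \<and> s * d_zero t = s) \<longleftrightarrow> s * dot t e = s"
   and P3: "\<forall>s. \<forall>e\<in>E. \<forall>f\<in>E. s * e = s \<and> s * f = s \<longrightarrow> s * meet E e f = s"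
    using ok unfolding dot_ok_def by auto
  have Q2: "(s * t * e = s * t \<and> s * d_one t = s) \<longleftrightarrow> s * (if t = 0 then 1 else dot t e) = s"
    if "e \<in> E" for t e s
  proof (cases "t = 0")
    case True then show ?thesis by (simp add: d_one_def)
  next
    case False
    have "d_zero t = 1" using False by (simp add: d_zero_def)
    moreover have "(s * t * e = s * t \<and> s * d_zero t = s) \<longleftrightarrow> s * dot t e = s"
      using P2 that by blast
    ultimately show ?thesis using False by (simp add: d_one_def)
  qed
  show ?thesis unfolding dot_ok_def using P1 P3 Q2 one by auto
qed

lemma dot_uniq:
  assumes rpr: "right_pre_reduced E" and idm: "\<forall>e\<in>E. e * e = e"
    and d1: "dot_ok d E dot1" and d2: "dot_ok d' E dot2" and dt: "d t = 1" and dt': "d' t = 1" and e: "e \<in> E"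
  shows "dot1 t e = dot2 t e"
proof -
  let ?u = "dot1 t e" and ?v = "dot2 t e"
  have uE: "?u \<in> E" and vE: "?v \<in> E" using d1 d2 e unfolding dot_ok_def by auto
  have I1a: "\<And>s. (s * t * e = s * t \<and> s * d t = s) \<longleftrightarrow> s * ?u = s"
    using d1 e unfolding dot_ok_def by blast
  have I1b: "\<And>s. (s * t * e = s * t \<and> s * d' t = s) \<longleftrightarrow> s * ?v = s"
    using d2 e unfolding dot_ok_def by blast
  have "?u * ?u = ?u" using idm uE by auto
  then have "?u * ?v = ?u" using I1a I1b dt dt' by simp
  moreover have "?v * ?v = ?v" using idm vE by auto
  then have "?v * ?u = ?v" using I1a I1b dt dt' by simp
  ultimately show ?thesis using rpr uE vE unfolding right_pre_reduced_def by metis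
qed

lemma meet_eq:
  assumes rpr: "right_pre_reduced E" and m: "is_meet E e f m"
  shows "meet E e f = m"
  unfolding meet_def
proof (rule the_equality)
  show "is_meet E e f m" by fact
  fix m' assume m': "is_meet E e f m'"
  have "le_r m m'" "le_r m' m" using m m' unfolding is_meet_def by auto
  then show "m' = m" using rpr m m' unfolding is_meet_def le_r_def right_pre_reduced_def by metis
qed

lemma meet_zero:
  fixes E :: "'a::{monoid_mult, mult_zero} set"
  assumes rpr: "right_pre_reduced E" and "0 \<in> E" "u \<in> E"
  shows "meet E 0 u = 0"
  using assms by (intro meet_eq) (auto simp: is_meet_def le_r_def)

theorem proposition3p12:
  fixes E :: "'a::{monoid_mult, mult_zero} set"
  assumes integ: "\<forall>s t::'a. s * t = 0 \<longrightarrow> s = 0 \<or> t = 0"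
    and E_idem: "\<forall>e\<in>E. e * e = e"
    and zero_in: "0 \<in> E" and one_in: "1 \<in> E"
  shows "(inductive_Edemigroup d_one E \<longleftrightarrow> inductive_Edemigroup d_zero E)
    \<and> (inductive_Edemigroup d_one E \<longrightarrow>
        (\<forall>x\<in>C_d d_zero E. \<forall>y\<in>C_d d_zero E.
           rest_mult d_one E x y \<in> C_d d_zero E \<and> rest_mult d_zero E x y = rest_mult d_one E x y))"
proof
  have D1: "E_demigroup d_one E" using demi_one E_idem one_in by blast
  have D0: "E_demigroup d_zero E" using demi_zero integ E_idem zero_in one_in by blast
  show eqv: "inductive_Edemigroup d_one E \<longleftrightarrow> inductive_Edemigroup d_zero E"
    unfolding inductive_Edemigroup_def using D1 D0 conv1[OF _ zero_in] conv2[OF _ one_in] by blast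
  show "inductive_Edemigroup d_one E \<longrightarrow>
        (\<forall>x\<in>C_d d_zero E. \<forall>y\<in>C_d d_zero E.
           rest_mult d_one E x y \<in> C_d d_zero E \<and> rest_mult d_zero E x y = rest_mult d_one E x y)"
  proof (intro impI ballI)
    fix x y assume ind1: "inductive_Edemigroup d_one E" and x: "x \<in> C_d d_zero E" and y: "y \<in> C_d d_zero E"
    have ind0: "inductive_Edemigroup d_zero E" using eqv ind1 by blast
    have rpr: "right_pre_reduced E" and ms: "meet_semilattice E" using ind1 unfolding inductive_Edemigroup_def by auto
    have ok1: "dot_ok d_one E (ind_dot d_one E)" using ind1 unfolding inductive_Edemigroup_def ind_dot_def
      by (metis someI_ex)
    have ok0: "dot_ok d_zero E (ind_dot d_zero E)" using ind0 unfolding inductive_Edemigroup_def ind_dot_def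
      by (metis someI_ex)
    obtain e s where xe: "x = (e, s)" by (cases x)
    obtain f t where yf: "y = (f, t)" by (cases y)
    have triv: "(0::'a) = 1 \<Longrightarrow> (z::'a) = 0" for z
      by (metis mult_1_left mult_zero_left)
    have dz: "d_zero a = d_zero b \<Longrightarrow> (a = 0) = (b = 0)" for a b :: 'a
    proof (cases "(0::'a) = 1")
      case True then show ?thesis using triv by metis
    next
      case False then show "d_zero a = d_zero b \<Longrightarrow> (a = 0) = (b = 0)"
        unfolding d_zero_def by (auto split: if_splits)
    qed
    have eE: "e \<in> E" and es: "e * s = s" and "d_zero e = d_zero s"
      using x xe unfolding C_d_def by auto
    then have des: "(e = 0) = (s = 0)" using dz by blast
    have fE: "f \<in> E" and ft: "f * t = t" and "d_zero f = d_zero t"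
      using y yf unfolding C_d_def by auto
    then have dft: "(f = 0) = (t = 0)" using dz by blast
    show "rest_mult d_one E x y \<in> C_d d_zero E \<and> rest_mult d_zero E x y = rest_mult d_one E x y"
    proof (cases "s = 0")
      case True
      then have e0: "e = 0" using des by simp
      have u1: "ind_dot d_one E s f \<in> E" "ind_dot d_zero E s f \<in> E"
        using ok1 ok0 fE unfolding dot_ok_def by auto
      show ?thesis using meet_zero[OF rpr zero_in u1(1)] meet_zero[OF rpr zero_in u1(2)] zero_in
        unfolding rest_mult_def xe yf e0 C_d_def by (simp add: True)
    next
      case False
      then have e0: "e \<noteq> 0" using des by simp
      have same: "ind_dot d_zero E s f = ind_dot d_one E s f"
        using dot_uniq[OF rpr E_idem ok0 ok1 _ _ fE] False by (simp add: d_zero_def d_one_def)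
      let ?u = "ind_dot d_one E s f"
      have uE: "?u \<in> E" using ok1 fE unfolding dot_ok_def by auto
      obtain g where g: "is_meet E e ?u g" using ms eE uE unfolding meet_semilattice_def by blast
      have mg: "meet E e ?u = g" using meet_eq[OF rpr g] .
      have gE: "g \<in> E" and gu: "g * ?u = g" using g unfolding is_meet_def le_r_def by auto
      have gg: "g * g = g" using E_idem gE by auto
      have I1: "g * s * f = g * s" using ok1 fE gu unfolding dot_ok_def d_one_def by auto
      have nz: "g \<noteq> 0 \<Longrightarrow> g * s * t \<noteq> 0"
      proof -
        assume gn: "g \<noteq> 0"
        have gs: "g * s \<noteq> 0" using integ gn False by blast
        have "t \<noteq> 0"
        proof
          assume "t = 0" then have "f = 0" using dft by simp
          then have "g * s = 0" using I1 by simp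
          then show False using gs by simp
        qed
        then show ?thesis using integ gs by blast
      qed
      have c: "g * (g * s * t) = g * s * t" using gg by (simp add: mult.assoc[symmetric])
      show ?thesis unfolding rest_mult_def xe yf C_d_def using same mg gE c nz
        by (auto simp: d_zero_def Let_def)
    qed
  qed
qed

end
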